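(* Let $G_l$ be a graph of order $n_l$, maximum degree $\Delta_l$ and minimum degree $\delta_l$, $l\in\{1,2\}$. Then for $i,j\in\{1,2\}$ with $i\neq j$ and every integer $k\in\{2-\delta_j-\Delta_i,\dots,\Delta_i-\delta_j\}$, $$\phi_k^o(G_1\times G_2)\ge n_j\,\phi_{k+\delta_j}^o(G_i).$$
   Context: All graphs are finite and simple. For a graph $G=(V,E)$, a set $S\subseteq V$ and $v\in V$, let $\delta_S(v)=|\{u\in S: uv\in E\}|$, $\overline{S}=V\setminus S$, and let $\partial S$ be the set of vertices of $\overline S$ adjacent to at least one vertex of $S$. For an integer $k$, a non-empty set $S\subseteq V$ is an offensive $k$-alliance if $\delta_S(v)\ge \delta_{\overline S}(v)+k$ for every $v\in \partial S$. A set $X\subseteq V$ is an offensive $k$-alliance free set ($k$-oaf set) if no offensive $k$-alliance $S$ satisfies $S\subseteq X$. $\phi_k^o(G)$ denotes the maximum cardinality of a $k$-oaf set in $G$. The Cartesian product $G_1\times G_2$ of $G_1=(V_1,E_1)$, $G_2=(V_2,E_2)$ has vertex set $V_1\times V_2$, with $(a,b)$ adjacent to $(c,d)$ iff either $a=c$ and $bd\in E_2$, or $b=d$ and $ac\in E_1$. *)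

theory Defs
  imports Main
begin

definition graph :: "'a set \<Rightarrow> ('a \<Rightarrow> 'a \<Rightarrow> bool) \<Rightarrow> bool" where
  "graph V E \<longleftrightarrow> finite V \<and> (\<forall>u v. E u v \<longrightarrow> u \<in> V \<and> v \<in> V)
     \<and> (\<forall>u v. E u v \<longrightarrow> E v u) \<and> (\<forall>v. \<not> E v v)"

definition deg :: "'a set \<Rightarrow> ('a \<Rightarrow> 'a \<Rightarrow> bool) \<Rightarrow> 'a \<Rightarrow> nat" where
  "deg V E v = card {u \<in> V. E v u}"

definition maxdeg :: "'a set \<Rightarrow> ('a \<Rightarrow> 'a \<Rightarrow> bool) \<Rightarrow> nat" where
  "maxdeg V E = Max (deg V E ` V)"

definition mindeg :: "'a set \<Rightarrow> ('a \<Rightarrow> 'a \<Rightarrow> bool) \<Rightarrow> nat" where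
  "mindeg V E = Min (deg V E ` V)"

definition nbr_in :: "('a \<Rightarrow> 'a \<Rightarrow> bool) \<Rightarrow> 'a set \<Rightarrow> 'a \<Rightarrow> nat" where
  "nbr_in E S v = card {u \<in> S. E v u}"

definition boundary :: "'a set \<Rightarrow> ('a \<Rightarrow> 'a \<Rightarrow> bool) \<Rightarrow> 'a set \<Rightarrow> 'a set" where
  "boundary V E S = {v \<in> V - S. \<exists>u \<in> S. E v u}"

definition off_alliance :: "'a set \<Rightarrow> ('a \<Rightarrow> 'a \<Rightarrow> bool) \<Rightarrow> int \<Rightarrow> 'a set \<Rightarrow> bool" where
  "off_alliance V E k S \<longleftrightarrow> S \<noteq> {} \<and> S \<subseteq> V \<and>
     (\<forall>v \<in> boundary V E S. int (nbr_in E S v) \<ge> int (nbr_in E (V - S) v) + k)"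

definition oaf :: "'a set \<Rightarrow> ('a \<Rightarrow> 'a \<Rightarrow> bool) \<Rightarrow> int \<Rightarrow> 'a set \<Rightarrow> bool" where
  "oaf V E k X \<longleftrightarrow> X \<subseteq> V \<and> \<not> (\<exists>S. S \<subseteq> X \<and> off_alliance V E k S)"

text \<open>\<phi>^o_k(G): maximum cardinality of a k-oaf set (the empty set is always k-oaf).\<close>
definition phi_o :: "'a set \<Rightarrow> ('a \<Rightarrow> 'a \<Rightarrow> bool) \<Rightarrow> int \<Rightarrow> nat" where
  "phi_o V E k = Max (card ` {X. oaf V E k X})"

text \<open>Edge relation of the Cartesian product; vertex set is V1 \<times> V2.\<close>
definition prodE :: "('a \<Rightarrow> 'a \<Rightarrow> bool) \<Rightarrow> ('b \<Rightarrow> 'b \<Rightarrow> bool) \<Rightarrow> ('a \<times> 'b) \<Rightarrow> ('a \<times> 'b) \<Rightarrow> bool" where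
  "prodE E1 E2 x y \<longleftrightarrow> (fst x = fst y \<and> E2 (snd x) (snd y)) \<or> (snd x = snd y \<and> E1 (fst x) (fst y))"

end

theory Submission
  imports Defs
begin

lemma phi_ge:
  assumes "finite V" "oaf V E k Y"
  shows "card Y \<le> phi_o V E k"
proof -
  have "card ` {X. oaf V E k X} \<subseteq> card ` Pow V" by (auto simp: oaf_def)
  hence fin: "finite (card ` {X. oaf V E k X})" by (rule finite_subset[OF _ finite_imageI]) (use assms(1) in auto)
  show ?thesis unfolding phi_o_def using assms(2) by (intro Max_ge[OF fin]) auto
qed

lemma phi_ex:
  assumes "finite V"
  shows "\<exists>X. oaf V E k X \<and> card X = phi_o V E k"
proof -
  have "card ` {X. oaf V E k X} \<subseteq> card ` Pow V" by (auto simp: oaf_def)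
  hence fin: "finite (card ` {X. oaf V E k X})" by (rule finite_subset[OF _ finite_imageI]) (use assms(1) in auto)
  have "oaf V E k {}" by (auto simp: oaf_def off_alliance_def)
  hence ne: "card ` {X. oaf V E k X} \<noteq> {}" by auto
  show ?thesis using Max_in[OF fin ne] unfolding phi_o_def by auto
qed

lemma mindeg_le:
  assumes "graph V E" "b \<in> V"
  shows "mindeg V E \<le> deg V E b"
  using assms unfolding mindeg_def graph_def by (intro Min_le) auto

lemma key1:
  assumes g1: "graph V1 E1" and g2: "graph V2 E2"
    and X: "oaf V1 E1 (k + int (mindeg V2 E2)) X"
  shows "oaf (V1 \<times> V2) (prodE E1 E2) k (X \<times> V2)"
proof -
  have f1: "finite V1" and f2: "finite V2" using g1 g2 by (auto simp: graph_def)
  have XV: "X \<subseteq> V1" using X by (auto simp: oaf_def)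
  { fix S assume SX: "S \<subseteq> X \<times> V2" and al: "off_alliance (V1 \<times> V2) (prodE E1 E2) k S"
    define A where "A = fst ` S"
    have "A \<subseteq> X" "A \<noteq> {}" using SX al by (auto simp: A_def off_alliance_def)
    hence "\<not> off_alliance V1 E1 (k + int (mindeg V2 E2)) A" using X by (auto simp: oaf_def)
    moreover have "A \<subseteq> V1" using \<open>A \<subseteq> X\<close> XV by auto
    ultimately obtain a where ab: "a \<in> boundary V1 E1 A"
      and lt: "\<not> int (nbr_in E1 A a) \<ge> int (nbr_in E1 (V1 - A) a) + (k + int (mindeg V2 E2))"
      using \<open>A \<noteq> {}\<close> by (auto simp: off_alliance_def)
    from ab obtain a' where a: "a \<in> V1" "a \<notin> A" "a' \<in> A" "E1 a a'" by (auto simp: boundary_def)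
    then obtain b where p: "(a', b) \<in> S" by (auto simp: A_def)
    have bV: "b \<in> V2" using p SX by auto
    have notS: "\<And>b'. (a, b') \<notin> S" using a(2) by (force simp: A_def)
    have bd: "(a, b) \<in> boundary (V1 \<times> V2) (prodE E1 E2) S"
      unfolding boundary_def using a bV notS p by (auto simp: prodE_def intro!: bexI[of _ "(a',b)"])
    hence ineq: "int (nbr_in (prodE E1 E2) S (a,b)) \<ge> int (nbr_in (prodE E1 E2) (V1 \<times> V2 - S) (a,b)) + k"
      using al by (auto simp: off_alliance_def)
    have c1: "nbr_in (prodE E1 E2) S (a,b) \<le> nbr_in E1 A a"
    proof -
      have "{u \<in> S. prodE E1 E2 (a,b) u} \<subseteq> (\<lambda>x. (x, b)) ` {x \<in> A. E1 a x}"
      proof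
        fix u assume u: "u \<in> {u \<in> S. prodE E1 E2 (a,b) u}"
        obtain x y where uxy: "u = (x,y)" by (cases u)
        have "x \<noteq> a" using u notS uxy by auto
        thus "u \<in> (\<lambda>x. (x, b)) ` {x \<in> A. E1 a x}" using u uxy
          by (auto simp: prodE_def A_def image_iff) (metis fst_conv)
      qed
      moreover have "finite {x \<in> A. E1 a x}" using \<open>A \<subseteq> V1\<close> f1 by (auto intro: finite_subset)
      ultimately have "card {u \<in> S. prodE E1 E2 (a,b) u} \<le> card ((\<lambda>x. (x, b)) ` {x \<in> A. E1 a x})"
        by (intro card_mono) auto
      also have "\<dots> \<le> card {x \<in> A. E1 a x}" by (rule card_image_le) (use \<open>finite {x \<in> A. E1 a x}\<close> in auto)
      finally show ?thesis by (simp add: nbr_in_def)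
    qed
    have c2: "nbr_in E1 (V1 - A) a + deg V2 E2 b \<le> nbr_in (prodE E1 E2) (V1 \<times> V2 - S) (a,b)"
    proof -
      let ?P = "(\<lambda>x. (x, b)) ` {x \<in> V1 - A. E1 a x}"
      let ?Q = "(\<lambda>y. (a, y)) ` {y \<in> V2. E2 b y}"
      have irr: "\<not> E1 a a" using g1 by (auto simp: graph_def)
      have dis: "?P \<inter> ?Q = {}" using irr by auto
      have fP: "finite ?P" using f1 by auto
      have fQ: "finite ?Q" using f2 by auto
      have sub: "?P \<union> ?Q \<subseteq> {u \<in> V1 \<times> V2 - S. prodE E1 E2 (a,b) u}"
        using bV a(1) notS g2 by (auto simp: prodE_def A_def graph_def image_iff)
      have fin: "finite {u \<in> V1 \<times> V2 - S. prodE E1 E2 (a,b) u}" using f1 f2 by auto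
      have "card ?P = nbr_in E1 (V1 - A) a" unfolding nbr_in_def by (rule card_image) (auto simp: inj_on_def)
      moreover have "card ?Q = deg V2 E2 b" unfolding deg_def by (rule card_image) (auto simp: inj_on_def)
      moreover have "card (?P \<union> ?Q) = card ?P + card ?Q" using card_Un_disjoint[OF fP fQ dis] .
      moreover have "card (?P \<union> ?Q) \<le> card {u \<in> V1 \<times> V2 - S. prodE E1 E2 (a,b) u}"
        using card_mono[OF fin sub] .
      ultimately show ?thesis by (simp add: nbr_in_def)
    qed
    have "mindeg V2 E2 \<le> deg V2 E2 b" using mindeg_le[OF g2 bV] .
    hence False using ineq c1 c2 lt by linarith
  }
  thus ?thesis using XV by (auto simp: oaf_def)
qed

lemma key2:
  assumes g1: "graph V1 E1" and g2: "graph V2 E2"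
    and X: "oaf V2 E2 (k + int (mindeg V1 E1)) X"
  shows "oaf (V1 \<times> V2) (prodE E1 E2) k (V1 \<times> X)"
proof -
  have f1: "finite V1" and f2: "finite V2" using g1 g2 by (auto simp: graph_def)
  have XV: "X \<subseteq> V2" using X by (auto simp: oaf_def)
  { fix S assume SX: "S \<subseteq> V1 \<times> X" and al: "off_alliance (V1 \<times> V2) (prodE E1 E2) k S"
    define A where "A = snd ` S"
    have "A \<subseteq> X" "A \<noteq> {}" using SX al by (auto simp: A_def off_alliance_def)
    hence "\<not> off_alliance V2 E2 (k + int (mindeg V1 E1)) A" using X by (auto simp: oaf_def)
    moreover have "A \<subseteq> V2" using \<open>A \<subseteq> X\<close> XV by auto
    ultimately obtain a where ab: "a \<in> boundary V2 E2 A"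
      and lt: "\<not> int (nbr_in E2 A a) \<ge> int (nbr_in E2 (V2 - A) a) + (k + int (mindeg V1 E1))"
      using \<open>A \<noteq> {}\<close> by (auto simp: off_alliance_def)
    from ab obtain a' where a: "a \<in> V2" "a \<notin> A" "a' \<in> A" "E2 a a'" by (auto simp: boundary_def)
    then obtain b where p: "(b, a') \<in> S" by (auto simp: A_def)
    have bV: "b \<in> V1" using p SX by auto
    have notS: "\<And>b'. (b', a) \<notin> S" using a(2) by (force simp: A_def)
    have bd: "(b, a) \<in> boundary (V1 \<times> V2) (prodE E1 E2) S"
      unfolding boundary_def using a bV notS p by (auto simp: prodE_def intro!: bexI[of _ "(b,a')"])
    hence ineq: "int (nbr_in (prodE E1 E2) S (b,a)) \<ge> int (nbr_in (prodE E1 E2) (V1 \<times> V2 - S) (b,a)) + k"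
      using al by (auto simp: off_alliance_def)
    have c1: "nbr_in (prodE E1 E2) S (b,a) \<le> nbr_in E2 A a"
    proof -
      have "{u \<in> S. prodE E1 E2 (b,a) u} \<subseteq> (\<lambda>x. (b, x)) ` {x \<in> A. E2 a x}"
      proof
        fix u assume u: "u \<in> {u \<in> S. prodE E1 E2 (b,a) u}"
        obtain x y where uxy: "u = (x,y)" by (cases u)
        have "y \<noteq> a" using u notS uxy by auto
        thus "u \<in> (\<lambda>x. (b, x)) ` {x \<in> A. E2 a x}" using u uxy
          by (auto simp: prodE_def A_def image_iff) (metis snd_conv)
      qed
      moreover have "finite {x \<in> A. E2 a x}" using \<open>A \<subseteq> V2\<close> f2 by (auto intro: finite_subset)
      ultimately have "card {u \<in> S. prodE E1 E2 (b,a) u} \<le> card ((\<lambda>x. (b, x)) ` {x \<in> A. E2 a x})"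
        by (intro card_mono) auto
      also have "\<dots> \<le> card {x \<in> A. E2 a x}" by (rule card_image_le) (use \<open>finite {x \<in> A. E2 a x}\<close> in auto)
      finally show ?thesis by (simp add: nbr_in_def)
    qed
    have c2: "nbr_in E2 (V2 - A) a + deg V1 E1 b \<le> nbr_in (prodE E1 E2) (V1 \<times> V2 - S) (b,a)"
    proof -
      let ?P = "(\<lambda>x. (b, x)) ` {x \<in> V2 - A. E2 a x}"
      let ?Q = "(\<lambda>y. (y, a)) ` {y \<in> V1. E1 b y}"
      have irr: "\<not> E2 a a" using g2 by (auto simp: graph_def)
      have dis: "?P \<inter> ?Q = {}" using irr by auto
      have fP: "finite ?P" using f2 by auto
      have fQ: "finite ?Q" using f1 by auto
      have sub: "?P \<union> ?Q \<subseteq> {u \<in> V1 \<times> V2 - S. prodE E1 E2 (b,a) u}"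
        using bV a(1) notS g1 by (auto simp: prodE_def A_def graph_def image_iff)
      have fin: "finite {u \<in> V1 \<times> V2 - S. prodE E1 E2 (b,a) u}" using f1 f2 by auto
      have "card ?P = nbr_in E2 (V2 - A) a" unfolding nbr_in_def by (rule card_image) (auto simp: inj_on_def)
      moreover have "card ?Q = deg V1 E1 b" unfolding deg_def by (rule card_image) (auto simp: inj_on_def)
      moreover have "card (?P \<union> ?Q) = card ?P + card ?Q" using card_Un_disjoint[OF fP fQ dis] .
      moreover have "card (?P \<union> ?Q) \<le> card {u \<in> V1 \<times> V2 - S. prodE E1 E2 (b,a) u}"
        using card_mono[OF fin sub] .
      ultimately show ?thesis by (simp add: nbr_in_def)
    qed
    have "mindeg V1 E1 \<le> deg V1 E1 b" using mindeg_le[OF g1 bV] .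
    hence False using ineq c1 c2 lt by linarith
  }
  thus ?thesis using XV by (auto simp: oaf_def)
qed

theorem corollary3:
  fixes V1 :: "'a set" and E1 :: "'a \<Rightarrow> 'a \<Rightarrow> bool"
    and V2 :: "'b set" and E2 :: "'b \<Rightarrow> 'b \<Rightarrow> bool"
  assumes "graph V1 E1" and "graph V2 E2" and "V1 \<noteq> {}" and "V2 \<noteq> {}"
  shows "(\<forall>k::int. 2 - int (mindeg V2 E2) - int (maxdeg V1 E1) \<le> k \<and> k \<le> int (maxdeg V1 E1) - int (mindeg V2 E2)
            \<longrightarrow> phi_o (V1 \<times> V2) (prodE E1 E2) k \<ge> card V2 * phi_o V1 E1 (k + int (mindeg V2 E2)))
       \<and> (\<forall>k::int. 2 - int (mindeg V1 E1) - int (maxdeg V2 E2) \<le> k \<and> k \<le> int (maxdeg V2 E2) - int (mindeg V1 E1)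
            \<longrightarrow> phi_o (V1 \<times> V2) (prodE E1 E2) k \<ge> card V1 * phi_o V2 E2 (k + int (mindeg V1 E1)))"
proof -
  have f1: "finite V1" and f2: "finite V2" using assms by (auto simp: graph_def)
  have fp: "finite (V1 \<times> V2)" using f1 f2 by auto
  have A: "phi_o (V1 \<times> V2) (prodE E1 E2) k \<ge> card V2 * phi_o V1 E1 (k + int (mindeg V2 E2))" for k
  proof -
    obtain X where X: "oaf V1 E1 (k + int (mindeg V2 E2)) X" "card X = phi_o V1 E1 (k + int (mindeg V2 E2))"
      using phi_ex[OF f1] by blast
    have "card (X \<times> V2) \<le> phi_o (V1 \<times> V2) (prodE E1 E2) k"
      by (rule phi_ge[OF fp key1[OF assms(1,2) X(1)]])
    thus ?thesis using X(2) by (simp add: card_cartesian_product mult.commute)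
  qed
  have B: "phi_o (V1 \<times> V2) (prodE E1 E2) k \<ge> card V1 * phi_o V2 E2 (k + int (mindeg V1 E1))" for k
  proof -
    obtain X where X: "oaf V2 E2 (k + int (mindeg V1 E1)) X" "card X = phi_o V2 E2 (k + int (mindeg V1 E1))"
      using phi_ex[OF f2] by blast
    have "card (V1 \<times> X) \<le> phi_o (V1 \<times> V2) (prodE E1 E2) k"
      by (rule phi_ge[OF fp key2[OF assms(1,2) X(1)]])
    thus ?thesis using X(2) by (simp add: card_cartesian_product)
  qed
  show ?thesis using A B by blast
qed

end
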